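(* Let $F=(n_F)_{n\ge 1}$ be a sequence belonging to the family $\mathcal{T}_\lambda$. Then $F$ is a cobweb tiling sequence: $F$ is admissible, and for all positive integers $m\le n$ the $F$-box $V_{m,n}$ has a tiling by sub-boxes of the forms $\sigma V_m$.
   Context: Throughout, $\mathbb{N}=\{1,2,\dots\}$. For a sequence of natural numbers $F=(n_F)$ write $[s_F]=\{1,2,\dots,s_F\}$ and $n_F!=n_F\cdot(n-1)_F\cdots 1_F$, with $0_F!=1$. The $F$-nomial coefficient is $\binom{n}{m}_F=\frac{n_F!}{m_F!\,(n-m)_F!}$ for $0\le m\le n$. $F$ is admissible if $\binom{n}{m}_F\in\mathbb{N}\cup\{0\}$ for all $0\le m\le n$. The $F$-box: for $1\le m\le n$ and $k=n-m+1$, let $V_{m,n}=[k_F]\times[(k+1)_F]\times\cdots\times[n_F]\subset\mathbb{N}^m$. Sub-box of the form $\sigma V_m$: for a permutation $\sigma$ of $\{1,\dots,m\}$, this is a set $A=A_1\times\cdots\times A_m$ with $A_s\subseteq[(k+s-1)_F]$ and $|A_s|=(\sigma(s))_F$ for $s=1,\dots,m$. Tiling of $V_{m,n}$: a finite family of pairwise disjoint sub-boxes, each of the form $\sigma V_m$ for some permutation $\sigma$ (which may depend on the sub-box), whose union is $V_{m,n}$. Equivalently, in cobweb language, this is a partition of the maximal paths of the cobweb layer $\langle\Phi_k\to\Phi_n\rangle$ into blocks $\sigma P_m$. A cobweb tiling sequence is an admissible sequence $F$ such that $V_{m,n}$ has a tiling for all $1\le m\le n$. The family $\mathcal{T}_\lambda$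 consists of sequences $F=(n_F)_{n\ge1}$ of natural numbers for which there exist functions $\lambda_K,\lambda_M:\mathbb{N}\times\mathbb{N}\to\mathbb{N}\cup\{0\}$ such that $(k+m)_F=\lambda_K(k,m)\,k_F+\lambda_M(k,m)\,m_F$ for all $k,m\in\mathbb{N}$. *)

theory Defs
  imports Main "HOL-Library.FuncSet" "HOL-Combinatorics.Permutations"
begin

text \<open>A sequence F = (n_F)_{n>=1} is modelled as F :: nat => nat; the value F 0 is irrelevant.\<close>

definition Ffact :: "(nat \<Rightarrow> nat) \<Rightarrow> nat \<Rightarrow> nat" where
  "Ffact F n = (\<Prod>i\<in>{1..n}. F i)"

text \<open>F-nomial coefficient is a non-negative integer iff the denominator divides the numerator.\<close>
definition admissible :: "(nat \<Rightarrow> nat) \<Rightarrow> bool" where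
  "admissible F \<longleftrightarrow>
     (\<forall>n m. m \<le> n \<longrightarrow> Ffact F m * Ffact F (n - m) dvd Ffact F n)"

text \<open>F-box V_{m,n} = [k_F] x ... x [n_F], k = n-m+1; coordinate s (1..m) ranges over [(k+s-1)_F] = [(n-m+s)_F].\<close>
definition Fbox :: "(nat \<Rightarrow> nat) \<Rightarrow> nat \<Rightarrow> nat \<Rightarrow> (nat \<Rightarrow> nat) set" where
  "Fbox F m n = PiE {1..m} (\<lambda>s. {1..F (n - m + s)})"

definition is_sigma_subbox :: "(nat \<Rightarrow> nat) \<Rightarrow> nat \<Rightarrow> nat \<Rightarrow> (nat \<Rightarrow> nat) set \<Rightarrow> bool" where
  "is_sigma_subbox F m n A \<longleftrightarrow>
     (\<exists>\<sigma> B. \<sigma> permutes {1..m} \<and>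
        (\<forall>s\<in>{1..m}. B s \<subseteq> {1..F (n - m + s)} \<and> card (B s) = F (\<sigma> s)) \<and>
        A = PiE {1..m} B)"

definition has_tiling :: "(nat \<Rightarrow> nat) \<Rightarrow> nat \<Rightarrow> nat \<Rightarrow> bool" where
  "has_tiling F m n \<longleftrightarrow>
     (\<exists>T. finite T \<and> (\<forall>A\<in>T. is_sigma_subbox F m n A) \<and> pairwise disjnt T \<and> \<Union>T = Fbox F m n)"

definition cobweb_tiling :: "(nat \<Rightarrow> nat) \<Rightarrow> bool" where
  "cobweb_tiling F \<longleftrightarrow> admissible F \<and> (\<forall>m n. 1 \<le> m \<and> m \<le> n \<longrightarrow> has_tiling F m n)"

text \<open>The family T_lambda (sequences of natural numbers, i.e. positive values at indices >= 1).\<close>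
definition in_T_lambda :: "(nat \<Rightarrow> nat) \<Rightarrow> bool" where
  "in_T_lambda F \<longleftrightarrow> (\<forall>n\<ge>1. F n \<ge> 1) \<and>
     (\<exists>lK lM :: nat \<Rightarrow> nat \<Rightarrow> nat. \<forall>k\<ge>1. \<forall>m\<ge>1. F (k + m) = lK k m * F k + lM k m * F m)"

end

theory Submission
  imports Defs
begin



definition tiles :: "(nat\<Rightarrow>nat) \<Rightarrow> nat \<Rightarrow> nat \<Rightarrow> (nat\<Rightarrow>nat) set \<Rightarrow> bool" where
"tiles F m n X \<longleftrightarrow> (\<exists>T. finite T \<and> (\<forall>A\<in>T. is_sigma_subbox F m n A) \<and> pairwise disjnt T \<and> \<Union>T = X)"

definition Xs :: "(nat\<Rightarrow>nat) \<Rightarrow> nat \<Rightarrow> nat \<Rightarrow> nat set \<Rightarrow> (nat\<Rightarrow>nat) set" where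
"Xs F m n S = PiE {1..m} (\<lambda>s. if s = m then S else {1..F(n-m+s)})"

lemma tiles_empty: "tiles F m n {}"
  unfolding tiles_def by (rule exI[of _ "{}"]) auto

lemma tiles_Un:
  assumes "tiles F m n X" "tiles F m n Y" "X \<inter> Y = {}"
  shows "tiles F m n (X \<union> Y)"
proof -
  obtain T where T: "finite T" "\<forall>A\<in>T. is_sigma_subbox F m n A" "pairwise disjnt T" "\<Union>T = X"
    using assms(1) unfolding tiles_def by blast
  obtain T' where T': "finite T'" "\<forall>A\<in>T'. is_sigma_subbox F m n A" "pairwise disjnt T'" "\<Union>T' = Y"
    using assms(2) unfolding tiles_def by blast
  have "pairwise disjnt (T \<union> T')"
    using T(3,4) T'(3,4) assms(3) unfolding pairwise_def disjnt_def by blast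
  then show ?thesis unfolding tiles_def
    using T T' by (intro exI[of _ "T \<union> T'"]) auto
qed

lemma Xs_empty: "1 \<le> m \<Longrightarrow> Xs F m n {} = {}"
  unfolding Xs_def by (auto simp: PiE_eq_empty_iff intro!: bexI[of _ m])

lemma Xs_Un: "Xs F m n (S \<union> S') = Xs F m n S \<union> Xs F m n S'"
  unfolding Xs_def PiE_def Pi_def by auto

lemma Xs_disj: "1 \<le> m \<Longrightarrow> S \<inter> S' = {} \<Longrightarrow> Xs F m n S \<inter> Xs F m n S' = {}"
  unfolding Xs_def PiE_def Pi_def by auto

lemma Xs_step:
  assumes "1 \<le> m" "tiles F m n (Xs F m n {1..N})" "tiles F m n (Xs F m n {N+1..N+L})"
  shows "tiles F m n (Xs F m n {1..N+L})"
proof -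
  have "{1..N+L} = {1..N} \<union> {N+1..N+L}" by auto
  moreover have "{1..N} \<inter> {N+1..N+L} = {}" by auto
  ultimately show ?thesis using assms tiles_Un Xs_Un Xs_disj by metis
qed

lemma Fbox_Xs: "m \<le> n \<Longrightarrow> Fbox F m n = Xs F m n {1..F n}"
  unfolding Fbox_def Xs_def by (rule PiE_cong) auto

lemma Ffact_add: "Ffact F (j + m) = Ffact F j * (\<Prod>s\<in>{1..m}. F (j + s))"
proof (induction m)
  case 0 then show ?case by simp
next
  case (Suc m)
  have "Ffact F (j + Suc m) = Ffact F (j+m) * F (j + Suc m)"
    unfolding Ffact_def by (simp add: prod.nat_ivl_Suc')
  moreover have "(\<Prod>s\<in>{1..Suc m}. F (j + s)) = (\<Prod>s\<in>{1..m}. F (j + s)) * F (j + Suc m)"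
    by (simp add: prod.nat_ivl_Suc')
  ultimately show ?case using Suc by simp
qed

lemma sigma_card:
  assumes "is_sigma_subbox F m n A"
  shows "card A = Ffact F m"
proof -
  obtain \<sigma> B where s: "\<sigma> permutes {1..m}" "\<forall>s\<in>{1..m}. B s \<subseteq> {1..F (n - m + s)} \<and> card (B s) = F (\<sigma> s)"
    "A = PiE {1..m} B" using assms unfolding is_sigma_subbox_def by blast
  have "card A = (\<Prod>s\<in>{1..m}. F (\<sigma> s))" using s by (simp add: card_PiE)
  also have "\<dots> = (\<Prod>s\<in>{1..m}. F s)"
    using prod.permute[OF s(1), of F] by (simp add: comp_def)
  finally show ?thesis unfolding Ffact_def .
qed




lemma PiE_ext_last:
  assumes "1 \<le> (m::nat)"
  shows "PiE {1..m} (B(m:=S)) = (\<lambda>(x, f). f(m := x)) ` (S \<times> PiE {1..m-1} B)"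
proof -
  have e: "{1..m} = insert m {1..m-1}" using assms by auto
  have "PiE {1..m-1} (B(m:=S)) = PiE {1..m-1} B" by (rule PiE_cong) auto
  then show ?thesis unfolding e PiE_insert_eq by simp
qed

lemma inj_ext_last:
  "inj_on (\<lambda>(x, f). f((m::nat) := x)) (S \<times> extensional {1..m-1})"
proof (rule inj_onI)
  fix p q
  assume p: "p \<in> S \<times> extensional {1..m-1}" and q: "q \<in> S \<times> extensional {1..m-1}"
    and eq0: "(case p of (x, f) \<Rightarrow> f(m := x)) = (case q of (x, f) \<Rightarrow> f(m := x))"
  obtain x f where pp: "p = (x, f)" by (cases p)
  obtain y g where qq: "q = (y, g)" by (cases q)
  have f: "f \<in> extensional {1..m-1}" using p pp by simp
  have g: "g \<in> extensional {1..m-1}" using q qq by simp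
  have eq: "f(m := x) = g(m := y)" using eq0 pp qq by simp
  have "x = y" using fun_cong[OF eq, of m] by simp
  moreover have "f = g"
  proof
    fix t show "f t = g t"
    proof (cases "t = m")
      case True
      have "m \<notin> {1..m-1}" by auto
      then show ?thesis using f g True by (metis extensional_arb)
    next
      case False then show ?thesis using fun_cong[OF eq, of t] by simp
    qed
  qed
  ultimately show "p = q" using pp qq by simp
qed

lemma pairwise_disjnt_image:
  assumes "inj_on g Y" "\<Union>T \<subseteq> Y" "pairwise disjnt T"
  shows "pairwise disjnt ((\<lambda>A. g ` A) ` T)"
  unfolding pairwise_def
proof (clarify)
  fix A A' assume A: "A \<in> T" "A' \<in> T" "g ` A \<noteq> g ` A'"
  then have "A \<noteq> A'" by auto
  then have "A \<inter> A' = {}" using A assms(3) unfolding pairwise_def disjnt_def by blast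
  moreover have "g ` (A \<inter> A') = g ` A \<inter> g ` A'"
    using inj_on_image_Int[OF assms(1)] A assms(2) by blast
  ultimately show "disjnt (g ` A) (g ` A')" unfolding disjnt_def by simp
qed

lemma blockB:
  assumes T: "has_tiling F (m-1) (n-1)" and m: "1 \<le> m" "m < n"
    and S: "S \<subseteq> {1..F n}" "card S = F m"
  shows "tiles F m n (Xs F m n S)"
proof -
  obtain T where T: "finite T" "\<forall>A\<in>T. is_sigma_subbox F (m-1) (n-1) A" "pairwise disjnt T"
    "\<Union>T = Fbox F (m-1) (n-1)"
    using assms(1) unfolding has_tiling_def by blast
  define g where "g = (\<lambda>(x::nat, f::nat\<Rightarrow>nat). f(m := x))"
  define T2 where "T2 = (\<lambda>A. S \<times> A) ` T"
  define T' where "T' = (\<lambda>A. g ` A) ` T2"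
  have fin: "finite T'" unfolding T'_def T2_def using T(1) by simp
  have U2: "\<Union>T2 = S \<times> Fbox F (m-1) (n-1)" unfolding T2_def using T(4) by auto
  have pd2: "pairwise disjnt T2"
    using T(3) unfolding T2_def pairwise_def disjnt_def by blast
  have sub: "\<Union>T2 \<subseteq> S \<times> extensional {1..m-1}" unfolding U2 Fbox_def
    using PiE_iff by blast
  have pd: "pairwise disjnt T'" unfolding T'_def
    by (rule pairwise_disjnt_image[OF _ sub pd2]) (unfold g_def, rule inj_ext_last)
  have "Fbox F (m-1) (n-1) = PiE {1..m-1} (\<lambda>s. {1..F (n - m + s)})"
    unfolding Fbox_def by (rule PiE_cong) (use m in auto)
  then have "g ` (S \<times> Fbox F (m-1) (n-1)) = g ` (S \<times> PiE {1..m-1} (\<lambda>s. {1..F (n - m + s)}))"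
    by simp
  also have "\<dots> = PiE {1..m} ((\<lambda>s. {1..F (n - m + s)})(m:=S))"
    unfolding g_def by (rule PiE_ext_last[OF m(1), symmetric])
  also have "\<dots> = Xs F m n S" unfolding Xs_def by (rule PiE_cong) auto
  finally have U0: "g ` (S \<times> Fbox F (m-1) (n-1)) = Xs F m n S" .
  have "\<Union>T' = g ` (\<Union>T2)" unfolding T'_def by (rule image_Union[symmetric])
  then have U: "\<Union>T' = Xs F m n S" using U0 U2 by simp
  have sig: "is_sigma_subbox F m n A" if AT: "A \<in> T'" for A
  proof -
    obtain A0 where A0: "A0 \<in> T" "A = g ` (S \<times> A0)" using AT unfolding T'_def T2_def by auto
    have "is_sigma_subbox F (m-1) (n-1) A0" using T(2) A0(1) by blast
    obtain \<sigma> B where s: "\<sigma> permutes {1..m-1}"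
      "\<forall>s\<in>{1..m-1}. B s \<subseteq> {1..F (n - 1 - (m - 1) + s)} \<and> card (B s) = F (\<sigma> s)"
      "A0 = PiE {1..m-1} B" using \<open>is_sigma_subbox F (m-1) (n-1) A0\<close> unfolding is_sigma_subbox_def by auto
    have p: "\<sigma> permutes {1..m}" by (rule permutes_subset[OF s(1)]) auto
    have sm: "\<sigma> m = m" by (rule permutes_not_in[OF s(1)]) auto
    have A: "A = PiE {1..m} (B(m:=S))" unfolding A0(2) s(3) g_def by (rule PiE_ext_last[OF m(1), symmetric])
    have C: "\<forall>s\<in>{1..m}. (B(m:=S)) s \<subseteq> {1..F (n - m + s)} \<and> card ((B(m:=S)) s) = F (\<sigma> s)"
    proof
      fix s assume s1: "s \<in> {1..m}"
      show "(B(m:=S)) s \<subseteq> {1..F (n - m + s)} \<and> card ((B(m:=S)) s) = F (\<sigma> s)"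
      proof (cases "s = m")
        case True then show ?thesis using S sm m by simp
      next
        case False
        then have "s \<in> {1..m-1}" using s1 by auto
        moreover have "n - 1 - (m - 1) + s = n - m + s" using m by auto
        ultimately show ?thesis using s(2) False by auto
      qed
    qed
    show ?thesis unfolding is_sigma_subbox_def using p A C by (intro exI[of _ \<sigma>] exI[of _ "B(m:=S)"]) simp
  qed
  show ?thesis unfolding tiles_def using fin sig pd U by (intro exI[of _ T']) simp
qed




definition phi :: "nat \<Rightarrow> nat \<Rightarrow> (nat \<Rightarrow> nat) \<Rightarrow> (nat \<Rightarrow> nat)" where
"phi m d f = (\<lambda>s. if s \<in> {1..m} then (if s = m then f 1 + d else f (s+1)) else undefined)"

definition rot :: "nat \<Rightarrow> nat \<Rightarrow> (nat \<Rightarrow> nat set) \<Rightarrow> (nat \<Rightarrow> nat set)" where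
"rot m d B = (\<lambda>s. if s = m then (\<lambda>x. x + d) ` B 1 else B (s+1))"

definition rho :: "nat \<Rightarrow> nat \<Rightarrow> nat" where
"rho m s = (if s = m then 1 else if s \<in> {1..m-1} then s+1 else s)"

lemma phi_PiE:
  assumes m: "1 \<le> m"
  shows "phi m d ` PiE {1..m} B = PiE {1..m} (rot m d B)"
proof
  show "phi m d ` PiE {1..m} B \<subseteq> PiE {1..m} (rot m d B)"
  proof
    fix h assume "h \<in> phi m d ` PiE {1..m} B"
    then obtain f where f: "f \<in> PiE {1..m} B" and h: "h = phi m d f" by blast
    show "h \<in> PiE {1..m} (rot m d B)" unfolding h
    proof (rule PiE_I)
      fix s assume s: "s \<in> {1..m}"
      show "phi m d f s \<in> rot m d B s"
      proof (cases "s = m")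
        case True
        have "1 \<in> {1..m}" using m by simp
        then have "f 1 \<in> B 1" using PiE_mem[OF f] by blast
        then have "f 1 + d \<in> (\<lambda>x. x + d) ` B 1" by (rule imageI)
        moreover have "phi m d f s = f 1 + d" using True s unfolding phi_def by simp
        moreover have "rot m d B s = (\<lambda>x. x + d) ` B 1" using True unfolding rot_def by simp
        ultimately show ?thesis by simp
      next
        case False
        then have "s + 1 \<in> {1..m}" using s by simp
        then have "f (s+1) \<in> B (s+1)" using PiE_mem[OF f] by blast
        moreover have "phi m d f s = f (s+1)" using False s unfolding phi_def by simp
        moreover have "rot m d B s = B (s+1)" using False unfolding rot_def by simp
        ultimately show ?thesis by simp
      qed
    next
      fix s assume "s \<notin> {1..m}" then show "phi m d f s = undefined" unfolding phi_def by auto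
    qed
  qed
next
  show "PiE {1..m} (rot m d B) \<subseteq> phi m d ` PiE {1..m} B"
  proof
    fix g assume g: "g \<in> PiE {1..m} (rot m d B)"
    define f where "f = (\<lambda>s. if s \<in> {1..m} then (if s = 1 then g m - d else g (s - 1)) else undefined)"
    have mm: "m \<in> {1..m}" using m by simp
    have "g m \<in> rot m d B m" using PiE_mem[OF g mm] .
    then have gm: "g m \<in> (\<lambda>x. x + d) ` B 1" unfolding rot_def by simp
    then obtain y where y: "y \<in> B 1" "g m = y + d" by blast
    have fB: "f \<in> PiE {1..m} B"
    proof (rule PiE_I)
      fix s assume s: "s \<in> {1..m}"
      show "f s \<in> B s"
      proof (cases "s = 1")
        case True
        have "f s = g m - d" using True s unfolding f_def by simp
        then show ?thesis using y True by simp
      next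
        case False
        then have s1: "s - 1 \<in> {1..m}" "s - 1 \<noteq> m" "s - 1 + 1 = s" using s by auto
        have "g (s - 1) \<in> rot m d B (s - 1)" using PiE_mem[OF g s1(1)] .
        then have "g (s - 1) \<in> B s" using s1 unfolding rot_def by simp
        moreover have "f s = g (s - 1)" using False s unfolding f_def by simp
        ultimately show ?thesis by simp
      qed
    next
      fix s assume "s \<notin> {1..m}" then show "f s = undefined" unfolding f_def by auto
    qed
    have "phi m d f = g"
    proof
      fix s show "phi m d f s = g s"
      proof (cases "s \<in> {1..m}")
        case False
        then have "g s = undefined" using g by (metis PiE_arb)
        then show ?thesis using False unfolding phi_def by auto
      next
        case True
        show ?thesis
        proof (cases "s = m")
          case sm: True
          have "f 1 = g m - d" using mm unfolding f_def by simp
          then have "f 1 + d = g m" using y by simp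
          then show ?thesis using sm True unfolding phi_def by simp
        next
          case False
          then have s1: "s + 1 \<in> {1..m}" "s + 1 \<noteq> 1" using True by auto
          then have "f (s+1) = g s" unfolding f_def by simp
          then show ?thesis using True False unfolding phi_def by simp
        qed
      qed
    qed
    then show "g \<in> phi m d ` PiE {1..m} B" using fB by blast
  qed
qed

lemma phi_inj: "inj_on (phi m d) (extensional {1..m})"
proof (rule inj_onI)
  fix f g assume f: "f \<in> extensional {1..m}" and g: "g \<in> extensional {1..m}" and eq: "phi m d f = phi m d g"
  show "f = g"
  proof
    fix t show "f t = g t"
    proof (cases "t \<in> {1..m}")
      case False then show ?thesis using f g by (metis extensional_arb)
    next
      case True
      show ?thesis
      proof (cases "t = 1")
        case True
        then have "m \<in> {1..m}" using \<open>t \<in> {1..m}\<close> by auto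
        then have "f 1 + d = g 1 + d" using fun_cong[OF eq, of m] unfolding phi_def by simp
        then show ?thesis using True by simp
      next
        case False
        then have "t - 1 \<in> {1..m}" "t - 1 \<noteq> m" "t - 1 + 1 = t" using \<open>t \<in> {1..m}\<close> by auto
        then show ?thesis using fun_cong[OF eq, of "t - 1"] unfolding phi_def by simp
      qed
    qed
  qed
qed

lemma rho_permutes:
  assumes m: "1 \<le> m"
  shows "rho m permutes {1..m}"
proof (rule bij_imp_permutes)
  have sub: "rho m ` {1..m} \<subseteq> {1..m}" unfolding rho_def using m by auto
  have inj: "inj_on (rho m) {1..m}" unfolding rho_def inj_on_def by auto
  show "bij_betw (rho m) {1..m} {1..m}" unfolding bij_betw_def
    using inj endo_inj_surj[OF _ sub inj] by simp
next
  fix x assume "x \<notin> {1..m}" then show "rho m x = x" unfolding rho_def using m by auto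
qed




lemma blockA:
  assumes T: "has_tiling F m (n-1)" and m: "1 \<le> m" "m < n"
    and od: "d + F (n-m) \<le> F n"
  shows "tiles F m n (Xs F m n {d+1..d+F (n-m)})"
proof -
  obtain T where T: "finite T" "\<forall>A\<in>T. is_sigma_subbox F m (n-1) A" "pairwise disjnt T"
    "\<Union>T = Fbox F m (n-1)"
    using assms(1) unfolding has_tiling_def by blast
  define T' where "T' = (\<lambda>A. phi m d ` A) ` T"
  have fin: "finite T'" unfolding T'_def using T(1) by simp
  have sub: "\<Union>T \<subseteq> extensional {1..m}" unfolding T(4) Fbox_def using PiE_iff by blast
  have pd: "pairwise disjnt T'" unfolding T'_def
    by (rule pairwise_disjnt_image[OF phi_inj sub T(3)])
  have "\<Union>T' = phi m d ` (\<Union>T)" unfolding T'_def by (rule image_Union[symmetric])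
  also have "\<dots> = PiE {1..m} (rot m d (\<lambda>s. {1..F (n - 1 - m + s)}))"
    unfolding T(4) Fbox_def by (rule phi_PiE[OF m(1)])
  also have "\<dots> = Xs F m n {d+1..d+F (n-m)}" unfolding Xs_def
  proof (rule PiE_cong)
    fix s assume s: "s \<in> {1..m}"
    show "rot m d (\<lambda>s. {1..F (n - 1 - m + s)}) s = (if s = m then {d+1..d+F (n-m)} else {1..F (n - m + s)})"
    proof (cases "s = m")
      case True
      have e: "n - 1 - m + 1 = n - m" using m by simp
      have "(\<lambda>x. x + d) ` {1..F (n-m)} = {d+1..d+F (n-m)}"
        by (simp add: image_add_atLeastAtMost' add.commute)
      then show ?thesis using True unfolding rot_def e by simp
    next
      case False
      have e: "n - 1 - m + (s + 1) = n - m + s" using m by simp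
      show ?thesis using False unfolding rot_def e by simp
    qed
  qed
  finally have U: "\<Union>T' = Xs F m n {d+1..d+F (n-m)}" .
  have sig: "is_sigma_subbox F m n A" if AT: "A \<in> T'" for A
  proof -
    obtain A0 where A0: "A0 \<in> T" "A = phi m d ` A0" using AT unfolding T'_def by auto
    have "is_sigma_subbox F m (n-1) A0" using T(2) A0(1) by blast
    then obtain \<sigma> B where s: "\<sigma> permutes {1..m}"
      "\<forall>s\<in>{1..m}. B s \<subseteq> {1..F (n - 1 - m + s)} \<and> card (B s) = F (\<sigma> s)"
      "A0 = PiE {1..m} B" unfolding is_sigma_subbox_def by auto
    have p: "\<sigma> \<circ> rho m permutes {1..m}" by (rule permutes_compose[OF rho_permutes[OF m(1)] s(1)])
    have A: "A = PiE {1..m} (rot m d B)" unfolding A0(2) s(3) by (rule phi_PiE[OF m(1)])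
    have C: "\<forall>s\<in>{1..m}. rot m d B s \<subseteq> {1..F (n - m + s)} \<and> card (rot m d B s) = F ((\<sigma> \<circ> rho m) s)"
    proof
      fix s assume s1: "s \<in> {1..m}"
      show "rot m d B s \<subseteq> {1..F (n - m + s)} \<and> card (rot m d B s) = F ((\<sigma> \<circ> rho m) s)"
      proof (cases "s = m")
        case True
        have one: "1 \<in> {1..m}" using m by simp
        have e: "n - 1 - m + 1 = n - m" "n - m + m = n" using m by auto
        have B10: "B 1 \<subseteq> {1..F (n - 1 - m + 1)} \<and> card (B 1) = F (\<sigma> 1)" using s(2) one by blast
        have B1: "B 1 \<subseteq> {1..F (n - m)}" "card (B 1) = F (\<sigma> 1)" using B10 unfolding e(1) by auto
        have "(\<lambda>x. x + d) ` B 1 \<subseteq> {1..F n}" using B1(1) od by auto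
        moreover have "card ((\<lambda>x. x + d) ` B 1) = card (B 1)" by (rule card_image) (simp add: inj_on_def)
        moreover have "rho m s = 1" using True unfolding rho_def by simp
        ultimately show ?thesis using True B1(2) e unfolding rot_def by simp
      next
        case False
        then have s2: "s + 1 \<in> {1..m}" using s1 by auto
        have e: "n - 1 - m + (s + 1) = n - m + s" using m by simp
        have "rho m s = s + 1" using False s1 unfolding rho_def by auto
        have Bs0: "B (s+1) \<subseteq> {1..F (n - 1 - m + (s+1))} \<and> card (B (s+1)) = F (\<sigma> (s+1))" using s(2) s2 by blast
        have Bs: "B (s+1) \<subseteq> {1..F (n - m + s)}" "card (B (s+1)) = F (\<sigma> (s+1))" using Bs0 unfolding e by auto
        show ?thesis using False Bs \<open>rho m s = s + 1\<close> unfolding rot_def by simp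
      qed
    qed
    show ?thesis unfolding is_sigma_subbox_def using p A C
      by (intro exI[of _ "\<sigma> \<circ> rho m"] exI[of _ "rot m d B"]) simp
  qed
  show ?thesis unfolding tiles_def using fin sig pd U by (intro exI[of _ T']) simp
qed




lemma whole_tile:
  assumes "m = 0 \<or> m = n"
  shows "has_tiling F m n"
proof -
  have "is_sigma_subbox F m n (Fbox F m n)"
    unfolding is_sigma_subbox_def Fbox_def
    using assms by (intro exI[of _ id] exI[of _ "\<lambda>s. {1..F (n - m + s)}"]) (auto simp: permutes_id)
  then show ?thesis unfolding has_tiling_def
    by (intro exI[of _ "{Fbox F m n}"]) (simp add: pairwise_def)
qed

lemma all_tiling:
  assumes TL: "in_T_lambda F"
  shows "m \<le> n \<Longrightarrow> has_tiling F m n"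
proof (induction n arbitrary: m)
  case 0 then show ?case using whole_tile by simp
next
  case (Suc n')
  show ?case
  proof (cases "m = 0 \<or> m = Suc n'")
    case True then show ?thesis using whole_tile by blast
  next
    case False
    define n where "n = Suc n'"
    have m: "1 \<le> m" "m < n" using False Suc.prems unfolding n_def by auto
    have IH1: "has_tiling F m (n-1)" using Suc.IH m unfolding n_def by simp
    have IH2: "has_tiling F (m-1) (n-1)" using Suc.IH m unfolding n_def by simp
    define k where "k = n - m"
    have k: "1 \<le> k" "k + m = n" using m unfolding k_def by auto
    obtain lK lM where L: "\<forall>k\<ge>1. \<forall>m\<ge>1. F (k + m) = lK k m * F k + lM k m * F m"
      using TL unfolding in_T_lambda_def by blast
    define a where "a = lK k m"
    define b where "b = lM k m"
    have Fn: "F n = a * F k + b * F m" using L k m unfolding a_def b_def by metis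
    have accB: "d * F m \<le> F n \<longrightarrow> tiles F m n (Xs F m n {1..d * F m})" for d
    proof (induction d)
      case 0 then show ?case using Xs_empty[OF m(1)] tiles_empty by simp
    next
      case (Suc d)
      show ?case
      proof
        assume le: "Suc d * F m \<le> F n"
        have t1: "tiles F m n (Xs F m n {1..d * F m})" using Suc le by simp
        have t2: "tiles F m n (Xs F m n {d * F m + 1..d * F m + F m})"
          by (rule blockB[OF IH2 m]) (use le in auto)
        have "tiles F m n (Xs F m n {1..d * F m + F m})" by (rule Xs_step[OF m(1) t1 t2])
        then show "tiles F m n (Xs F m n {1..Suc d * F m})" by (simp add: add.commute)
      qed
    qed
    have accA: "c * F k + b * F m \<le> F n \<longrightarrow> tiles F m n (Xs F m n {1..c * F k + b * F m})" for c
    proof (induction c)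
      case 0 then show ?case using accB by simp
    next
      case (Suc c)
      show ?case
      proof
        assume le: "Suc c * F k + b * F m \<le> F n"
        have t1: "tiles F m n (Xs F m n {1..c * F k + b * F m})" using Suc le by simp
        have t2: "tiles F m n (Xs F m n {(c * F k + b * F m) + 1..(c * F k + b * F m) + F (n - m)})"
          by (rule blockA[OF IH1 m]) (use le in \<open>simp add: k_def[symmetric]\<close>)
        have "tiles F m n (Xs F m n {1..(c * F k + b * F m) + F (n - m)})" by (rule Xs_step[OF m(1) t1 t2])
        then show "tiles F m n (Xs F m n {1..Suc c * F k + b * F m})" by (simp add: k_def[symmetric] algebra_simps)
      qed
    qed
    have "tiles F m n (Xs F m n {1..F n})" using accA[of a] Fn by simp
    then show ?thesis unfolding has_tiling_def tiles_def n_def[symmetric] Fbox_Xs[OF less_imp_le[OF m(2)]] .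
  qed
qed

lemma admissible_from_tiling:
  assumes "\<And>m n. m \<le> n \<Longrightarrow> has_tiling F m n"
  shows "admissible F"
  unfolding admissible_def
proof (intro allI impI)
  fix n m :: nat assume mn: "m \<le> n"
  obtain T where T: "finite T" "\<forall>A\<in>T. is_sigma_subbox F m n A" "pairwise disjnt T" "\<Union>T = Fbox F m n"
    using assms[OF mn] unfolding has_tiling_def by blast
  have finB: "finite (Fbox F m n)" unfolding Fbox_def by (simp add: finite_PiE)
  have "card (Fbox F m n) = sum card T" using card_Union_disjoint[OF T(3)] T(4) finB
    by (metis Sup_upper finite_subset)
  also have "\<dots> = (\<Sum>A\<in>T. Ffact F m)" using T(2) sigma_card by (intro sum.cong) auto
  also have "\<dots> = card T * Ffact F m" by simp
  finally have c: "card (Fbox F m n) = card T * Ffact F m" .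
  have "card (Fbox F m n) = (\<Prod>s\<in>{1..m}. F (n - m + s))" unfolding Fbox_def by (simp add: card_PiE)
  moreover have "Ffact F n = Ffact F (n - m) * (\<Prod>s\<in>{1..m}. F (n - m + s))"
    using Ffact_add[of F "n - m" m] mn by simp
  ultimately have "Ffact F n = Ffact F (n - m) * (card T * Ffact F m)" using c by simp
  then show "Ffact F m * Ffact F (n - m) dvd Ffact F n" by (simp add: mult.commute mult.left_commute)
qed

theorem theorem1:
  fixes F :: "nat \<Rightarrow> nat"
  assumes "in_T_lambda F"
  shows "cobweb_tiling F"
  unfolding cobweb_tiling_def
  using all_tiling[OF assms] admissible_from_tiling[OF all_tiling[OF assms]] by blast


end
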